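(* Let $M$ and $I$ be observable FSMs over the same input alphabet $\Sigma_I$ and output alphabet $\Sigma_O$, with initial states $s_0$ and $t_0$ respectively. Let $k\in\mathbb{N}$, let $\bar x_1/\bar y_1,\ \bar x_2/\bar y_2\in L(M)\cap L(I)$, and suppose that a set $W\subseteq\Sigma_I^*$ r($k$)-distinguishes the states $s_0\text{-after-}\bar x_1/\bar y_1$ and $s_0\text{-after-}\bar x_2/\bar y_2$ of $M$. If $I$ passes every test case in $\{\bar x_1,\bar x_2\}.W$, then $t_0\text{-after-}\bar x_1/\bar y_1\neq t_0\text{-after-}\bar x_2/\bar y_2$, i.e. the two traces reach distinct states of $I$.
   Context: An FSM is $M=(S,s_0,\Sigma_I,\Sigma_O,h_M)$ with finite state set $S$, initial state $s_0$, finite input/output alphabets and transition relation $h_M\subseteq S\times\Sigma_I\times\Sigma_O\times S$. IO sequences $(x_1,y_1)\dots(x_n,y_n)$ are written $x_1\dots x_n/y_1\dots y_n$. $L_M(s)$ is the set of IO sequences $x_1\dots x_k/y_1\dots y_k$ such that there are states $s=q_0,q_1,\dots,q_k$ with $(q_{i-1},x_i,y_i,q_i)\in h_M$ for all $i$; $L(M)=L_M(s_0)$. $out(s,x)=\{y\mid\exists s'.(s,x,y,s')\in h_M\}$. $M$ is observable if for each $s,x,y$ there is at most one $s'$ with $(s,x,y,s')\in h_M$; then $s\text{-after-}\alpha$ denotes the unique state reached from $s$ by $\alpha\in L_M(s)$. $\Delta_M(s)=\{x\in\Sigma_I\mid out(s,x)\neq\varnothing\}$ is the set of defined inputs of $s$,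 and for an IO sequence $\alpha$, $\Delta_M(\alpha)=\Delta_M(s_0\text{-after-}\alpha)$ if $\alpha\in L(M)$ and $\Delta_M(\alpha)=\varnothing$ otherwise. $\mathrm{Pref}(\alpha)$ is the set of prefixes of a sequence (including $\epsilon$ and $\alpha$), lifted to sets by union; $A.B=\{a.b\mid a\in A,b\in B\}$ for sets of sequences, with the convention $A.\varnothing=A$. r-distinguishing sets: every $W\subseteq\Sigma_I^*$ r(0)-distinguishes any two states $s_1,s_2$ of $M$ with $\Delta_M(s_1)\neq\Delta_M(s_2)$. For $k\ge0$, $W$ r($k+1$)-distinguishes $s_1,s_2$ if $W$ r($k$)-distinguishes them, or if there is an input $x\in\Delta_M(s_1)\cap\Delta_M(s_2)$ with $x\in\mathrm{Pref}(W)$ (as a length-one sequence) such that for every $y\in out(s_1,x)\cap out(s_2,x)$ there exists $W'\subseteq\Sigma_I^*$ with $\{x\}.W'\subseteq\mathrm{Pref}(W)$ and $W'$ r($k$)-distinguishes $s_1\text{-after-}x/y$ and $s_2\text{-after-}x/y$. Pass relation: $I$ passes a test case $\bar x\in\Sigma_I^*$ if for every prefix $\bar x_1$ of $\bar x$ and every $\bar x_1/\bar y_1\in L(I)$ we have $\bar x_1/\bar y_1\in L(M)$ and $\Delta_I(\bar x_1/\bar y_1)=\Delta_M(\bar x_1/\bar y_1)$. $I$ passes a set $T$ if it passes every element of $T$. *)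

theory Defs
  imports Main "HOL-Library.Sublist"
begin

record ('s, 'a, 'b) fsm =
  states      :: "'s set"
  initial     :: 's
  inputs      :: "'a set"
  outputs     :: "'b set"
  transitions :: "('s \<times> 'a \<times> 'b \<times> 's) set"

definition well_formed_fsm :: "('s, 'a, 'b) fsm \<Rightarrow> bool" where
  "well_formed_fsm M \<longleftrightarrow> finite (states M) \<and> initial M \<in> states M
     \<and> finite (inputs M) \<and> finite (outputs M)
     \<and> transitions M \<subseteq> states M \<times> inputs M \<times> outputs M \<times> states M"

definition observable :: "('s, 'a, 'b) fsm \<Rightarrow> bool" where
  "observable M \<longleftrightarrow> (\<forall>s x y s1 s2. (s,x,y,s1) \<in> transitions M \<and> (s,x,y,s2) \<in> transitions M \<longrightarrow> s1 = s2)"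

fun reaches :: "('s, 'a, 'b) fsm \<Rightarrow> 's \<Rightarrow> ('a \<times> 'b) list \<Rightarrow> 's \<Rightarrow> bool" where
  "reaches M s [] s' = (s' = s)"
| "reaches M s ((x,y) # io) s' = (\<exists>q. (s,x,y,q) \<in> transitions M \<and> reaches M q io s')"

definition LS :: "('s, 'a, 'b) fsm \<Rightarrow> 's \<Rightarrow> ('a \<times> 'b) list set" where
  "LS M s = {io. \<exists>s'. reaches M s io s'}"

definition L :: "('s, 'a, 'b) fsm \<Rightarrow> ('a \<times> 'b) list set" where
  "L M = LS M (initial M)"

definition after :: "('s, 'a, 'b) fsm \<Rightarrow> 's \<Rightarrow> ('a \<times> 'b) list \<Rightarrow> 's" where
  "after M s io = (THE s'. reaches M s io s')"

definition out :: "('s, 'a, 'b) fsm \<Rightarrow> 's \<Rightarrow> 'a \<Rightarrow> 'b set" where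
  "out M s x = {y. \<exists>s'. (s,x,y,s') \<in> transitions M}"

definition defined_inputs :: "('s, 'a, 'b) fsm \<Rightarrow> 's \<Rightarrow> 'a set" where
  "defined_inputs M s = {x \<in> inputs M. out M s x \<noteq> {}}"

definition defined_inputs_seq :: "('s, 'a, 'b) fsm \<Rightarrow> ('a \<times> 'b) list \<Rightarrow> 'a set" where
  "defined_inputs_seq M io =
     (if io \<in> L M then defined_inputs M (after M (initial M) io) else {})"

definition Pref :: "'x list set \<Rightarrow> 'x list set" where
  "Pref A = {p. \<exists>w\<in>A. prefix p w}"

text \<open>Concatenation of sets of sequences with the convention A.{} = A.\<close>
definition seq_concat :: "'x list set \<Rightarrow> 'x list set \<Rightarrow> 'x list set" where
  "seq_concat A B = (if B = {} then A else {a @ b | a b. a \<in> A \<and> b \<in> B})"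

fun r_dist :: "('s, 'a, 'b) fsm \<Rightarrow> nat \<Rightarrow> 'a list set \<Rightarrow> 's \<Rightarrow> 's \<Rightarrow> bool" where
  "r_dist M 0 W s1 s2 = (defined_inputs M s1 \<noteq> defined_inputs M s2)"
| "r_dist M (Suc k) W s1 s2 =
     (r_dist M k W s1 s2 \<or>
      (\<exists>x \<in> defined_inputs M s1 \<inter> defined_inputs M s2. [x] \<in> Pref W \<and>
         (\<forall>y \<in> out M s1 x \<inter> out M s2 x. \<exists>W'. W' \<subseteq> lists (inputs M) \<and>
              seq_concat {[x]} W' \<subseteq> Pref W \<and>
              r_dist M k W' (after M s1 [(x,y)]) (after M s2 [(x,y)]))))"

definition passes :: "('s, 'a, 'b) fsm \<Rightarrow> ('t, 'a, 'b) fsm \<Rightarrow> 'a list \<Rightarrow> bool" where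
  "passes M I xs \<longleftrightarrow> (\<forall>io. prefix (map fst io) xs \<and> io \<in> L I \<longrightarrow>
       io \<in> L M \<and> defined_inputs_seq I io = defined_inputs_seq M io)"

definition passes_set :: "('s, 'a, 'b) fsm \<Rightarrow> ('t, 'a, 'b) fsm \<Rightarrow> 'a list set \<Rightarrow> bool" where
  "passes_set M I T \<longleftrightarrow> (\<forall>xs\<in>T. passes M I xs)"

end

theory Submission
  imports Defs
begin

lemma reaches_append: "reaches M s (a@b) s' = (\<exists>q. reaches M s a q \<and> reaches M q b s')"
  proof (induction a arbitrary: s)
  case Nil then show ?case by simp
next
  case (Cons p a) then show ?case by (cases p) (simp, blast)
qed

lemma reaches_det: "observable M \<Longrightarrow> reaches M s io s1 \<Longrightarrow> reaches M s io s2 \<Longrightarrow> s1 = s2"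
proof (induction io arbitrary: s)
  case Nil then show ?case by simp
next
  case (Cons p io)
  obtain x y where p: "p = (x,y)" by (cases p)
  from Cons.prems p obtain q1 q2 where "(s,x,y,q1) \<in> transitions M" "reaches M q1 io s1"
     "(s,x,y,q2) \<in> transitions M" "reaches M q2 io s2" by auto
  moreover then have "q1 = q2" using Cons.prems(1) unfolding observable_def by blast
  ultimately show ?case using Cons by blast
qed

lemma after_eq: "observable M \<Longrightarrow> reaches M s io s' \<Longrightarrow> after M s io = s'"
  unfolding after_def using reaches_det by (metis theI_unique)

lemma after_reaches: "observable M \<Longrightarrow> io \<in> LS M s \<Longrightarrow> reaches M s io (after M s io)"
  unfolding LS_def using after_eq by fastforce

lemma passes_prefix: "passes M I xs \<Longrightarrow> prefix ys xs \<Longrightarrow> passes M I ys"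
  unfolding passes_def by (meson prefix_order.trans)

lemma level0:
  assumes "observable M" "observable I" "io \<in> L M \<inter> L I" "passes M I (map fst io)"
  shows "defined_inputs I (after I (initial I) io) = defined_inputs M (after M (initial M) io)"
  using assms unfolding passes_def defined_inputs_seq_def by auto

lemma main:
  assumes oM: "observable M" and oI: "observable I"
  shows "io1 \<in> L M \<inter> L I \<Longrightarrow> io2 \<in> L M \<inter> L I
    \<Longrightarrow> r_dist M k W (after M (initial M) io1) (after M (initial M) io2)
    \<Longrightarrow> (\<forall>w\<in>insert [] W. passes M I (map fst io1 @ w) \<and> passes M I (map fst io2 @ w))
    \<Longrightarrow> after I (initial I) io1 \<noteq> after I (initial I) io2"
proof (induction k arbitrary: W io1 io2)
  case 0
  then have "passes M I (map fst io1)" "passes M I (map fst io2)" by auto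
  then have "defined_inputs I (after I (initial I) io1) = defined_inputs M (after M (initial M) io1)"
     "defined_inputs I (after I (initial I) io2) = defined_inputs M (after M (initial M) io2)"
    using level0[OF oM oI] "0.prems"(1,2) by blast+
  then show ?case using "0.prems"(3) by auto
next
  case (Suc k)
  have p1: "passes M I (map fst io1)" and p2: "passes M I (map fst io2)" using Suc.prems(4) by auto
  show ?case
  proof
    assume eq: "after I (initial I) io1 = after I (initial I) io2"
    define t where "t = after I (initial I) io1"
    define s1 where "s1 = after M (initial M) io1"
    define s2 where "s2 = after M (initial M) io2"
    have d1: "defined_inputs I t = defined_inputs M s1"
      using level0[OF oM oI Suc.prems(1) p1] t_def s1_def by simp
    show False
    proof (cases "r_dist M k W s1 s2")
      case True
      have "after I (initial I) io1 \<noteq> after I (initial I) io2"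
        by (rule Suc.IH[OF Suc.prems(1,2) _ Suc.prems(4)]) (use True s1_def s2_def in simp)
      then show ?thesis using eq by simp
    next
      case False
      then obtain x where x: "x \<in> defined_inputs M s1 \<inter> defined_inputs M s2" "[x] \<in> Pref W"
        and H: "\<forall>y \<in> out M s1 x \<inter> out M s2 x. \<exists>W'. W' \<subseteq> lists (inputs M) \<and>
              seq_concat {[x]} W' \<subseteq> Pref W \<and>
              r_dist M k W' (after M s1 [(x,y)]) (after M s2 [(x,y)])"
      proof -
        have "r_dist M (Suc k) W s1 s2" using Suc.prems(3) s1_def s2_def by simp
        then show ?thesis using False that by (simp only: r_dist.simps) blast
      qed
      have "x \<in> defined_inputs I t" using d1 x by auto
      then obtain y t' where tr: "(t,x,y,t') \<in> transitions I"
        unfolding defined_inputs_def out_def by auto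
      obtain w where w: "w \<in> W" "prefix [x] w" using x(2) unfolding Pref_def by auto
      have rt1: "reaches I (initial I) io1 t" using after_reaches[OF oI] Suc.prems(1) t_def
        unfolding L_def by auto
      have rt2: "reaches I (initial I) io2 t" using after_reaches[OF oI] Suc.prems(2) eq t_def
        unfolding L_def by auto
      have rs1: "reaches M (initial M) io1 s1" using after_reaches[OF oM] Suc.prems(1) s1_def
        unfolding L_def by auto
      have rs2: "reaches M (initial M) io2 s2" using after_reaches[OF oM] Suc.prems(2) s2_def
        unfolding L_def by auto
      have ri1: "reaches I (initial I) (io1@[(x,y)]) t'" using rt1 tr reaches_append by fastforce
      have ri2: "reaches I (initial I) (io2@[(x,y)]) t'" using rt2 tr reaches_append by fastforce
      have L1: "io1@[(x,y)] \<in> L I" "io2@[(x,y)] \<in> L I" using ri1 ri2 unfolding L_def LS_def by auto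
      have pw1: "passes M I (map fst io1 @ w)" and pw2: "passes M I (map fst io2 @ w)"
        using Suc.prems(4) w by auto
      have "prefix (map fst (io1@[(x,y)])) (map fst io1 @ w)" using w(2) by simp
      then have M1: "io1@[(x,y)] \<in> L M" using pw1 L1 unfolding passes_def by blast
      have "prefix (map fst (io2@[(x,y)])) (map fst io2 @ w)" using w(2) by simp
      then have M2: "io2@[(x,y)] \<in> L M" using pw2 L1 unfolding passes_def by blast
      from M1 obtain q1 where "reaches M (initial M) (io1@[(x,y)]) q1" unfolding L_def LS_def by auto
      then obtain a1 where a1: "reaches M (initial M) io1 a1" "(a1,x,y,q1) \<in> transitions M"
        unfolding reaches_append by auto
      have "a1 = s1" using reaches_det[OF oM a1(1) rs1] .
      with a1 have q1: "(s1,x,y,q1) \<in> transitions M" by simp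
      from M2 obtain q2 where "reaches M (initial M) (io2@[(x,y)]) q2" unfolding L_def LS_def by auto
      then obtain a2 where a2: "reaches M (initial M) io2 a2" "(a2,x,y,q2) \<in> transitions M"
        unfolding reaches_append by auto
      have "a2 = s2" using reaches_det[OF oM a2(1) rs2] .
      with a2 have q2: "(s2,x,y,q2) \<in> transitions M" by simp
      have "y \<in> out M s1 x \<inter> out M s2 x" using q1 q2 unfolding out_def by auto
      then obtain W' where W': "seq_concat {[x]} W' \<subseteq> Pref W"
          "r_dist M k W' (after M s1 [(x,y)]) (after M s2 [(x,y)])" using H by blast
      have aq1: "after M s1 [(x,y)] = q1" using after_eq[OF oM] q1 by simp
      have aq2: "after M s2 [(x,y)] = q2" using after_eq[OF oM] q2 by simp
      have rq1: "reaches M (initial M) (io1@[(x,y)]) q1" using rs1 q1 reaches_append by fastforce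
      have rq2: "reaches M (initial M) (io2@[(x,y)]) q2" using rs2 q2 reaches_append by fastforce
      have P: "\<forall>w'\<in>insert [] W'. passes M I (map fst (io1@[(x,y)]) @ w') \<and>
                 passes M I (map fst (io2@[(x,y)]) @ w')"
      proof
        fix w' assume w': "w' \<in> insert [] W'"
        have "x # w' \<in> Pref W"
        proof (cases "w' = []")
          case True then show ?thesis using x(2) by simp
        next
          case False
          then have "W' \<noteq> {}" "w' \<in> W'" using w' by auto
          then show ?thesis using W'(1) unfolding seq_concat_def by auto
        qed
        then obtain v where v: "v \<in> W" "prefix (x # w') v" unfolding Pref_def by auto
        have "passes M I (map fst io1 @ v)" "passes M I (map fst io2 @ v)" using Suc.prems(4) v by auto
        moreover have "prefix (map fst (io1@[(x,y)]) @ w') (map fst io1 @ v)"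
          "prefix (map fst (io2@[(x,y)]) @ w') (map fst io2 @ v)" using v(2) by auto
        ultimately show "passes M I (map fst (io1@[(x,y)]) @ w') \<and>
                 passes M I (map fst (io2@[(x,y)]) @ w')" using passes_prefix by blast
      qed
      have "after I (initial I) (io1@[(x,y)]) \<noteq> after I (initial I) (io2@[(x,y)])"
      proof (rule Suc.IH[OF _ _ _ P])
        show "io1 @ [(x, y)] \<in> L M \<inter> L I" "io2 @ [(x, y)] \<in> L M \<inter> L I" using M1 M2 L1 by simp_all
        show "r_dist M k W' (after M (initial M) (io1 @ [(x, y)])) (after M (initial M) (io2 @ [(x, y)]))"
          using W'(2) unfolding aq1 aq2 after_eq[OF oM rq1] after_eq[OF oM rq2] .
      qed
      then show False using after_eq[OF oI ri1] after_eq[OF oI ri2] by simp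
    qed
  qed
qed

theorem lemma1:
  fixes M :: "('s, 'a, 'b) fsm" and I :: "('t, 'a, 'b) fsm"
    and k :: nat and io1 io2 :: "('a \<times> 'b) list" and W :: "'a list set"
  assumes "well_formed_fsm M" and "well_formed_fsm I"
    and "observable M" and "observable I"
    and "inputs I = inputs M" and "outputs I = outputs M"
    and "io1 \<in> L M \<inter> L I" and "io2 \<in> L M \<inter> L I"
    and "W \<subseteq> lists (inputs M)"
    and "r_dist M k W (after M (initial M) io1) (after M (initial M) io2)"
    and "passes_set M I (seq_concat {map fst io1, map fst io2} W)"
  shows "after I (initial I) io1 \<noteq> after I (initial I) io2"
proof -
  have A: "passes M I (map fst io1 @ w) \<and> passes M I (map fst io2 @ w)"
    if "w \<in> W \<or> (W = {} \<and> w = [])" for w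
  proof -
    have "map fst io1 @ w \<in> seq_concat {map fst io1, map fst io2} W"
         "map fst io2 @ w \<in> seq_concat {map fst io1, map fst io2} W"
      using that unfolding seq_concat_def by auto
    then show ?thesis using assms(11) unfolding passes_set_def by blast
  qed
  have B: "\<forall>w\<in>insert [] W. passes M I (map fst io1 @ w) \<and> passes M I (map fst io2 @ w)"
  proof
    fix w assume w: "w \<in> insert [] W"
    show "passes M I (map fst io1 @ w) \<and> passes M I (map fst io2 @ w)"
    proof (cases "w \<in> W \<or> (W = {} \<and> w = [])")
      case True then show ?thesis using A by blast
    next
      case False
      then have "w = []" "W \<noteq> {}" using w by auto
      then obtain w0 where w0: "w0 \<in> W" by blast
      have "passes M I (map fst io1)"
        by (rule passes_prefix[of _ _ "map fst io1 @ w0"]) (use A[of w0] w0 in auto)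
      moreover have "passes M I (map fst io2)"
        by (rule passes_prefix[of _ _ "map fst io2 @ w0"]) (use A[of w0] w0 in auto)
      ultimately show ?thesis using \<open>w = []\<close> by simp
    qed
  qed
  show ?thesis by (rule main[OF assms(3,4,7,8,10) B])
qed

end
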